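(* Let $p$ be a prime, $R=\mathbb Z_{(p)}$ the localization of $\mathbb Z$ at $(p)$, and $\mathbb Z(p^\infty)=\mathbb Q/R$ the Prüfer group. Then the elements $\left(\frac{1}{p^{nt}}+R\right)_{n\ge1}$, $t\in\mathbb N^*$, of $(\mathbb Z(p^\infty))^{\mathbb N^*}$ are free generators of a free abelian subgroup of infinite rank; consequently $\mathbb Q\oplus(\mathbb Z(p^\infty))^{\mathbb N^*}\cong(\mathbb Z(p^\infty))^{\mathbb N^*}$ as $R$-modules. (Here $\mathbb Q$ and $\mathbb Z(p^\infty)$ are uniserial $R$-modules with local endomorphism rings, $[\mathbb Q]_m\neq[\mathbb Z(p^\infty)]_m$ and $[\mathbb Q]_e\ne[\mathbb Z(p^\infty)]_e$, so no bijections $\mathbb N\to\mathbb N^*$ preserve monogeny or epigeny classes between the families $\{\mathbb Q,\mathbb Z(p^\infty),\mathbb Z(p^\infty),\dots\}$ and $\{\mathbb Z(p^\infty),\mathbb Z(p^\infty),\dots\}$.)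
   Context: $\mathbb N^*$ denotes the set of positive integers. $[M]_m=[N]_m$ means there exist monomorphisms $M\to N$, $N\to M$; $[M]_e=[N]_e$ means there exist epimorphisms $M\to N$, $N\to M$. *)

theory Defs
  imports Complex_Main "HOL-Computational_Algebra.Primes"
begin

definition Zloc :: "nat \<Rightarrow> rat set" where
  "Zloc p = {q. \<exists>a b::int. b \<noteq> 0 \<and> \<not> (int p dvd b) \<and> q = of_int a / of_int b}"

text \<open>Equality in the Pruefer group Z(p^oo) = Q/R, on representatives.\<close>
definition pr_eq :: "nat \<Rightarrow> rat \<Rightarrow> rat \<Rightarrow> bool" where
  "pr_eq p x y \<longleftrightarrow> x - y \<in> Zloc p"

text \<open>Elements of (Z(p^oo))^(N*) are represented by sequences of rationals;
  only the indices n \<ge> 1 matter.\<close>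
definition seq_eq :: "nat \<Rightarrow> (nat \<Rightarrow> rat) \<Rightarrow> (nat \<Rightarrow> rat) \<Rightarrow> bool" where
  "seq_eq p f g \<longleftrightarrow> (\<forall>n\<ge>1. pr_eq p (f n) (g n))"

definition sum_eq :: "nat \<Rightarrow> rat \<times> (nat \<Rightarrow> rat) \<Rightarrow> rat \<times> (nat \<Rightarrow> rat) \<Rightarrow> bool" where
  "sum_eq p x y \<longleftrightarrow> fst x = fst y \<and> seq_eq p (snd x) (snd y)"

definition gen :: "nat \<Rightarrow> nat \<Rightarrow> nat \<Rightarrow> rat" where
  "gen p t n = 1 / of_nat p ^ (n * t)"

text \<open>phi, given on representatives, induces an R-module isomorphism
  Q \<oplus> (Z(p^oo))^(N*) \<rightarrow> (Z(p^oo))^(N*).\<close>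
definition R_iso :: "nat \<Rightarrow> (rat \<times> (nat \<Rightarrow> rat) \<Rightarrow> (nat \<Rightarrow> rat)) \<Rightarrow> bool" where
  "R_iso p \<phi> \<longleftrightarrow>
     (\<forall>x y. sum_eq p x y \<longrightarrow> seq_eq p (\<phi> x) (\<phi> y)) \<and>
     (\<forall>a f b g. seq_eq p (\<phi> (a + b, \<lambda>n. f n + g n)) (\<lambda>n. \<phi> (a, f) n + \<phi> (b, g) n)) \<and>
     (\<forall>r\<in>Zloc p. \<forall>a f. seq_eq p (\<phi> (r * a, \<lambda>n. r * f n)) (\<lambda>n. r * \<phi> (a, f) n)) \<and>
     (\<forall>a f. seq_eq p (\<phi> (a, f)) (\<lambda>_. 0) \<longrightarrow> a = 0 \<and> seq_eq p f (\<lambda>_. 0)) \<and>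
     (\<forall>g. \<exists>a f. seq_eq p (\<phi> (a, f)) g)"

end

theory Submission
  imports Defs "HOL-Library.Function_Algebras" "HOL-Library.Nat_Bijection"
begin

lemma Zloc_int: assumes "prime p" shows "of_int a \<in> Zloc p"
proof -
  have "\<not> int p dvd 1" using assms using prime_gt_1_nat[OF assms] by auto
  thus ?thesis unfolding Zloc_def by (intro CollectI exI[of _ a] exI[of _ 1]) auto
qed

lemma Zloc_add: assumes "x \<in> Zloc p" "y \<in> Zloc p" and pr: "prime p" shows "x + y \<in> Zloc p"
proof -
  from assms obtain a b c d where "b \<noteq> 0" "\<not> int p dvd b" "x = of_int a / of_int b"
    "d \<noteq> 0" "\<not> int p dvd d" "y = of_int c / of_int d" unfolding Zloc_def by auto
  moreover have "\<not> int p dvd b * d" using pr \<open>\<not> int p dvd b\<close> \<open>\<not> int p dvd d\<close>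
    by (metis prime_dvd_mult_iff prime_nat_int_transfer)
  ultimately show ?thesis unfolding Zloc_def
    by (intro CollectI exI[of _ "a*d + c*b"] exI[of _ "b*d"]) (auto simp: field_simps)
qed

lemma Zloc_mult: assumes "x \<in> Zloc p" "y \<in> Zloc p" and pr: "prime p" shows "x * y \<in> Zloc p"
proof -
  from assms obtain a b c d where "b \<noteq> 0" "\<not> int p dvd b" "x = of_int a / of_int b"
    "d \<noteq> 0" "\<not> int p dvd d" "y = of_int c / of_int d" unfolding Zloc_def by auto
  moreover have "\<not> int p dvd b * d" using pr \<open>\<not> int p dvd b\<close> \<open>\<not> int p dvd d\<close>
    by (metis prime_dvd_mult_iff prime_nat_int_transfer)
  ultimately show ?thesis unfolding Zloc_def
    by (intro CollectI exI[of _ "a*c"] exI[of _ "b*d"]) (auto simp: field_simps)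
qed

lemma Zloc_uminus: assumes "x \<in> Zloc p" shows "- x \<in> Zloc p"
proof -
  from assms obtain a b where "b \<noteq> 0" "\<not> int p dvd b" "x = of_int a / of_int b"
    unfolding Zloc_def by auto
  thus ?thesis unfolding Zloc_def
    by (intro CollectI exI[of _ "-a"] exI[of _ "b"]) auto
qed

lemma Zloc_diff: assumes "x \<in> Zloc p" "y \<in> Zloc p" and pr: "prime p" shows "x - y \<in> Zloc p"
  using Zloc_add[OF assms(1) Zloc_uminus[OF assms(2)] pr] by simp

lemma Zloc_key: assumes pr: "prime p" and h: "of_int m / of_nat p ^ k \<in> Zloc p"
  shows "int p ^ k dvd m"
proof -
  from h obtain a b where b: "b \<noteq> 0" "\<not> int p dvd b" "of_int m / of_nat p ^ k = (of_int a / of_int b :: rat)"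
    unfolding Zloc_def by auto
  have p0: "(of_nat p :: rat) ^ k \<noteq> 0" using pr by (simp add: prime_gt_0_nat)
  from b(3) have "of_int m * of_int b = (of_int a * of_nat p ^ k :: rat)" using b(1) p0
    by (simp add: field_simps)
  hence "m * b = a * int p ^ k" by (metis of_int_eq_iff of_int_mult of_int_of_nat_eq of_int_power)
  hence "int p ^ k dvd m * b" by simp
  moreover have "coprime (int p ^ k) b" using pr b(2)
    by (metis coprime_power_left_iff prime_imp_coprime prime_nat_int_transfer)
  ultimately show ?thesis using coprime_dvd_mult_left_iff by blast
qed


lemma small_dvd: assumes pr: "prime p" and m: "m \<noteq> 0" and n: "nat \<bar>m\<bar> \<le> n"
  shows "\<not> int p ^ n dvd m"
proof
  assume d: "int p ^ n dvd m"
  have "n < 2 ^ n" by simp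
  also have "(2::nat) ^ n \<le> p ^ n" using prime_ge_2_nat[OF pr] by (simp add: power_mono)
  finally have "int n < int (p ^ n)" by (simp only: of_nat_less_iff)
  hence "int n < int p ^ n" by simp
  hence lt: "\<bar>m\<bar> < int p ^ n" using n by linarith
  have "int p ^ n \<le> \<bar>m\<bar>" using dvd_imp_le_int[OF m d] by simp
  with lt show False by simp
qed

lemma not_Zloc_inv_pow: assumes pr: "prime p" and m: "m \<noteq> 0"
  shows "\<exists>n. of_int m * (1 / of_nat p ^ n) \<notin> Zloc p"
proof
  let ?n = "nat \<bar>m\<bar>"
  show "of_int m * (1 / of_nat p ^ ?n) \<notin> Zloc p"
  proof
    assume "of_int m * (1 / of_nat p ^ ?n) \<in> Zloc p"
    hence "of_int m / of_nat p ^ ?n \<in> Zloc p" by simp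
    hence d: "int p ^ ?n dvd m" by (rule Zloc_key[OF pr])
    with small_dvd[OF pr m, of ?n] show False by simp
  qed
qed

lemma exists_pi:
  assumes pr: "prime p"
  shows "\<exists>\<pi>::(nat\<Rightarrow>rat)\<Rightarrow>rat. (\<forall>f g. \<pi> (\<lambda>n. f n + g n) = \<pi> f + \<pi> g)
     \<and> (\<forall>r f. \<pi> (\<lambda>n. r * f n) = r * \<pi> f)
     \<and> (\<forall>f. (\<forall>n. f n \<in> Zloc p) \<longrightarrow> \<pi> f = 0) \<and> (\<forall>q. \<pi> (\<lambda>n. q / of_nat p ^ n) = q)"
proof -
  define sc :: "rat \<Rightarrow> (nat \<Rightarrow> rat) \<Rightarrow> (nat \<Rightarrow> rat)" where "sc = (\<lambda>r f n. r * f n)"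
  interpret V: vector_space sc
    by unfold_locales (auto simp: sc_def fun_eq_iff algebra_simps plus_fun_def)
  interpret W: vector_space "(*) :: rat \<Rightarrow> rat \<Rightarrow> rat"
    by unfold_locales (auto simp: algebra_simps)
  interpret VW: vector_space_pair sc "(*) :: rat \<Rightarrow> rat \<Rightarrow> rat" ..
  define Bs where "Bs = {f::nat\<Rightarrow>rat. \<exists>m::int. m \<noteq> 0 \<and> (\<forall>n. of_int m * f n \<in> Zloc p)}"
  have sub: "V.subspace Bs"
    unfolding V.subspace_def
  proof (intro conjI ballI allI)
    show "0 \<in> Bs" unfolding Bs_def using Zloc_int[OF pr, of 0] by (intro CollectI exI[of _ 1]) auto
  next
    fix x y assume "x \<in> Bs" "y \<in> Bs"
    then obtain m1 m2 where m: "m1 \<noteq> 0" "\<forall>n. of_int m1 * x n \<in> Zloc p"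
      "m2 \<noteq> 0" "\<forall>n. of_int m2 * y n \<in> Zloc p" unfolding Bs_def by auto
    have "\<forall>n. of_int (m1*m2) * (x + y) n \<in> Zloc p"
    proof
      fix n
      have eq: "of_int (m1*m2) * (x + y) n = of_int m2 * (of_int m1 * x n) + of_int m1 * (of_int m2 * y n)"
        unfolding plus_fun_apply of_int_mult by algebra
      have h1: "of_int m2 * (of_int m1 * x n) \<in> Zloc p"
        by (rule Zloc_mult[OF Zloc_int[OF pr] m(2)[rule_format] pr])
      have h2: "of_int m1 * (of_int m2 * y n) \<in> Zloc p"
        by (rule Zloc_mult[OF Zloc_int[OF pr] m(4)[rule_format] pr])
      show "of_int (m1*m2) * (x + y) n \<in> Zloc p"
        unfolding eq by (rule Zloc_add[OF h1 h2 pr])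
    qed
    moreover have "m1 * m2 \<noteq> 0" using m by simp
    ultimately show "x + y \<in> Bs" unfolding Bs_def by blast
  next
    fix c and x assume "x \<in> Bs"
    then obtain m where m: "m \<noteq> 0" "\<forall>n. of_int m * x n \<in> Zloc p" unfolding Bs_def by auto
    obtain a b where ab: "quotient_of c = (a, b)" by (cases "quotient_of c")
    have b: "b > 0" "c = of_int a / of_int b" using quotient_of_denom_pos[OF ab] quotient_of_div[OF ab] by auto
    have "\<forall>n. of_int (m*b) * sc c x n \<in> Zloc p"
    proof
      fix n
      have eq: "of_int (m*b) * sc c x n = of_int a * (of_int m * x n)"
      proof -
        have b0: "(of_int b :: rat) \<noteq> 0" using b(1) by simp
        have "of_int (m*b) * sc c x n = (of_int b * (of_int a / of_int b)) * (of_int m * x n)"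
          unfolding sc_def b(2) of_int_mult by algebra
        also have "of_int b * (of_int a / of_int b) = (of_int a :: rat)" using b0 by simp
        finally show ?thesis .
      qed
      show "of_int (m*b) * sc c x n \<in> Zloc p"
        unfolding eq by (rule Zloc_mult[OF Zloc_int[OF pr] m(2)[rule_format] pr])
    qed
    moreover have "m * b \<noteq> 0" using m b by simp
    ultimately show "sc c x \<in> Bs" unfolding Bs_def by blast
  qed
  define e :: "nat \<Rightarrow> rat" where "e = (\<lambda>n. 1 / of_nat p ^ n)"
  have eB: "e \<notin> Bs" unfolding Bs_def e_def using not_Zloc_inv_pow[OF pr] by blast
  obtain B0 where B0: "B0 \<subseteq> Bs" "V.independent B0" "Bs \<subseteq> V.span B0"
    using V.maximal_independent_subset by blast
  have spanB: "V.span B0 = Bs" using V.span_minimal[OF B0(1) sub] B0(3) by blast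
  have ind: "V.independent (insert e B0)"
    using V.independent_insertI[OF _ B0(2)] eB spanB by blast
  obtain g where g: "Vector_Spaces.linear sc (*) g" "\<forall>x\<in>insert e B0. g x = (if x = e then 1 else 0)"
    using VW.linear_independent_extend[OF ind, of "\<lambda>x. if x = e then 1 else 0"] by blast
  have g0: "\<forall>x\<in>Bs. g x = 0"
  proof -
    have "\<forall>x\<in>V.span B0. g x = 0"
    proof
      fix x assume x: "x \<in> V.span B0"
      have "\<And>y. y \<in> B0 \<Longrightarrow> g y = 0" using g(2) eB B0(1) by auto
      thus "g x = 0" using VW.linear_eq_0_on_span[OF g(1) _ x] by blast
    qed
    thus ?thesis using spanB by simp
  qed
  have gadd: "\<And>x y. g (x + y) = g x + g y" using VW.linear_add[OF g(1)] .
  have gsc: "\<And>r x. g (sc r x) = r * g x" using VW.linear_scale[OF g(1)] .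
  show ?thesis
  proof (intro exI[of _ g] conjI allI impI)
    fix f h :: "nat \<Rightarrow> rat"
    show "g (\<lambda>n. f n + h n) = g f + g h" using gadd[of f h] by (simp add: plus_fun_def)
  next
    fix r and f :: "nat \<Rightarrow> rat"
    show "g (\<lambda>n. r * f n) = r * g f" using gsc[of r f] by (simp add: sc_def)
  next
    fix f :: "nat \<Rightarrow> rat" assume "\<forall>n. f n \<in> Zloc p"
    hence "f \<in> Bs" unfolding Bs_def by (intro CollectI exI[of _ 1]) auto
    thus "g f = 0" using g0 by blast
  next
    fix q
    have "(\<lambda>n. q / of_nat p ^ n) = sc q e" by (simp add: sc_def e_def fun_eq_iff)
    thus "g (\<lambda>n. q / of_nat p ^ n) = q" using gsc[of q e] g(2) by simp
  qed
qed


definition blk :: "(nat\<Rightarrow>rat) \<Rightarrow> nat \<Rightarrow> nat \<Rightarrow> rat" where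
  "blk f j = (\<lambda>m. f (Suc (prod_encode (j,m))))"
definition io :: "nat \<Rightarrow> rat \<Rightarrow> nat \<Rightarrow> rat" where
  "io p q = (\<lambda>n. q / of_nat p ^ n)"
definition Qs :: "((nat\<Rightarrow>rat)\<Rightarrow>rat) \<Rightarrow> rat \<Rightarrow> (nat\<Rightarrow>rat) \<Rightarrow> nat \<Rightarrow> rat" where
  "Qs \<pi> a f j = (case j of 0 \<Rightarrow> a | Suc i \<Rightarrow> \<pi> (blk f i))"
definition Hs :: "nat \<Rightarrow> ((nat\<Rightarrow>rat)\<Rightarrow>rat) \<Rightarrow> rat \<Rightarrow> (nat\<Rightarrow>rat) \<Rightarrow> nat \<Rightarrow> nat \<Rightarrow> rat" where
  "Hs p \<pi> a f j m = blk f j m - io p (\<pi> (blk f j)) m + io p (Qs \<pi> a f j) m"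
definition phi :: "nat \<Rightarrow> ((nat\<Rightarrow>rat)\<Rightarrow>rat) \<Rightarrow> rat \<times> (nat\<Rightarrow>rat) \<Rightarrow> nat \<Rightarrow> rat" where
  "phi p \<pi> x n = (case prod_decode (n - 1) of (j, m) \<Rightarrow> Hs p \<pi> (fst x) (snd x) j m)"

lemma phi_at: "phi p \<pi> x (Suc (prod_encode (j, m))) = Hs p \<pi> (fst x) (snd x) j m"
  unfolding phi_def by simp

lemma blk_dec: "n \<ge> 1 \<Longrightarrow> prod_decode (n - 1) = (j, m) \<Longrightarrow> blk f j m = f n"
proof -
  assume n: "n \<ge> 1" and d: "prod_decode (n - 1) = (j, m)"
  have "prod_encode (j, m) = n - 1" using prod_decode_inverse[of "n - 1"] d by (simp only: )
  hence "Suc (prod_encode (j, m)) = n" using n by simp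
  thus ?thesis unfolding blk_def by simp
qed

lemma phi_dec: "n \<ge> 1 \<Longrightarrow> prod_decode (n - 1) = (j, m) \<Longrightarrow> phi p \<pi> x n = Hs p \<pi> (fst x) (snd x) j m"
  unfolding phi_def by simp

locale pil =
  fixes p :: nat and \<pi> :: "(nat\<Rightarrow>rat)\<Rightarrow>rat"
  assumes pr: "prime p"
  and padd: "\<And>f g. \<pi> (\<lambda>n. f n + g n) = \<pi> f + \<pi> g"
  and psc: "\<And>r f. \<pi> (\<lambda>n. r * f n) = r * \<pi> f"
  and pkill: "\<And>f. (\<forall>n. f n \<in> Zloc p) \<Longrightarrow> \<pi> f = 0"
  and pio: "\<And>q. \<pi> (\<lambda>n. q / of_nat p ^ n) = q"
begin

lemma pdiff: "\<pi> (\<lambda>n. f n - g n) = \<pi> f - \<pi> g"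
  using padd[of f "\<lambda>n. (-1) * g n"] psc[of "-1" g] by simp

lemma p3: "\<pi> (\<lambda>n. f n - g n + h n) = \<pi> f - \<pi> g + \<pi> h"
  using padd[of "\<lambda>n. f n - g n" h] pdiff[of f g] by simp

lemma pio': "\<pi> (io p q) = q" unfolding io_def by (rule pio)

lemma pcong: "(\<And>m. f m - g m \<in> Zloc p) \<Longrightarrow> \<pi> f = \<pi> g"
  using pkill[of "\<lambda>m. f m - g m"] pdiff by simp

lemma piH: "\<pi> (Hs p \<pi> a f j) = Qs \<pi> a f j"
proof -
  have "Hs p \<pi> a f j = (\<lambda>m. blk f j m - io p (\<pi> (blk f j)) m + io p (Qs \<pi> a f j) m)"
    unfolding Hs_def by (rule ext) simp
  thus ?thesis using p3 pio' by simp
qed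

lemma iszero: "x - x \<in> Zloc p" using Zloc_int[OF pr, of 0] by simp

lemma R_iso_phi: "R_iso p (phi p \<pi>)"
  unfolding R_iso_def
proof (intro conjI allI impI ballI)
  fix x y assume "sum_eq p x y"
  hence a: "fst x = fst y" and f: "\<And>n. n \<ge> 1 \<Longrightarrow> snd x n - snd y n \<in> Zloc p"
    unfolding sum_eq_def seq_eq_def pr_eq_def by auto
  have bl: "\<And>j m. blk (snd x) j m - blk (snd y) j m \<in> Zloc p" unfolding blk_def using f by simp
  have pb: "\<And>j. \<pi> (blk (snd x) j) = \<pi> (blk (snd y) j)" using pcong bl by blast
  have qs: "\<And>j. Qs \<pi> (fst x) (snd x) j = Qs \<pi> (fst y) (snd y) j"
    unfolding Qs_def using a pb by (simp split: nat.split)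
  show "seq_eq p (phi p \<pi> x) (phi p \<pi> y)"
    unfolding seq_eq_def pr_eq_def
  proof (intro allI impI)
    fix n :: nat assume "n \<ge> 1"
    obtain j m where jm: "prod_decode (n - 1) = (j, m)" by (cases "prod_decode (n - 1)")
    have "phi p \<pi> x n - phi p \<pi> y n = blk (snd x) j m - blk (snd y) j m"
      unfolding phi_def jm Hs_def using pb qs by simp
    thus "phi p \<pi> x n - phi p \<pi> y n \<in> Zloc p" using bl by simp
  qed
next
  fix a f b g
  have pb: "\<And>j. \<pi> (blk (\<lambda>n. f n + g n) j) = \<pi> (blk f j) + \<pi> (blk g j)"
    unfolding blk_def using padd by simp
  have qs: "\<And>j. Qs \<pi> (a + b) (\<lambda>n. f n + g n) j = Qs \<pi> a f j + Qs \<pi> b g j"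
    unfolding Qs_def using pb by (simp split: nat.split)
  have "\<And>n. phi p \<pi> (a + b, \<lambda>n. f n + g n) n = phi p \<pi> (a, f) n + phi p \<pi> (b, g) n"
  proof -
    fix n
    obtain j m where jm: "prod_decode (n - 1) = (j, m)" by (cases "prod_decode (n - 1)")
    show "phi p \<pi> (a + b, \<lambda>n. f n + g n) n = phi p \<pi> (a, f) n + phi p \<pi> (b, g) n"
      unfolding phi_def jm Hs_def io_def using pb qs
      by (simp add: blk_def add_divide_distrib diff_divide_distrib)
  qed
  thus "seq_eq p (phi p \<pi> (a + b, \<lambda>n. f n + g n)) (\<lambda>n. phi p \<pi> (a, f) n + phi p \<pi> (b, g) n)"
    unfolding seq_eq_def pr_eq_def using iszero by simp
next
  fix r a f
  have pb: "\<And>j. \<pi> (blk (\<lambda>n. r * f n) j) = r * \<pi> (blk f j)"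
    unfolding blk_def using psc by simp
  have qs: "\<And>j. Qs \<pi> (r * a) (\<lambda>n. r * f n) j = r * Qs \<pi> a f j"
    unfolding Qs_def using pb by (simp split: nat.split)
  have "\<And>n. phi p \<pi> (r * a, \<lambda>n. r * f n) n = r * phi p \<pi> (a, f) n"
  proof -
    fix n
    obtain j m where jm: "prod_decode (n - 1) = (j, m)" by (cases "prod_decode (n - 1)")
    show "phi p \<pi> (r * a, \<lambda>n. r * f n) n = r * phi p \<pi> (a, f) n"
      unfolding phi_def jm Hs_def io_def using pb qs
      by (simp add: blk_def right_diff_distrib distrib_left)
  qed
  thus "seq_eq p (phi p \<pi> (r * a, \<lambda>n. r * f n)) (\<lambda>n. r * phi p \<pi> (a, f) n)"
    unfolding seq_eq_def pr_eq_def using iszero by simp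
next
  fix a f assume h: "seq_eq p (phi p \<pi> (a, f)) (\<lambda>_. 0)"
  have hz: "\<And>j m. Hs p \<pi> a f j m \<in> Zloc p"
  proof -
    fix j m
    have "phi p \<pi> (a, f) (Suc (prod_encode (j, m))) - 0 \<in> Zloc p"
      using h unfolding seq_eq_def pr_eq_def by auto
    thus "Hs p \<pi> a f j m \<in> Zloc p" by (simp add: phi_at)
  qed
  have qz: "\<And>j. Qs \<pi> a f j = 0"
  proof -
    fix j
    have "\<pi> (Hs p \<pi> a f j) = 0" using pkill hz by blast
    thus "Qs \<pi> a f j = 0" using piH by simp
  qed
  show a0: "a = 0" using qz[of 0] unfolding Qs_def by simp
  have pb: "\<And>i. \<pi> (blk f i) = 0" using qz unfolding Qs_def by (metis nat.simps(5))
  have "\<And>j m. Hs p \<pi> a f j m = blk f j m"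
    unfolding Hs_def io_def using pb qz by simp
  hence bz: "\<And>j m. blk f j m \<in> Zloc p" using hz by metis
  show "seq_eq p f (\<lambda>_. 0)"
    unfolding seq_eq_def pr_eq_def
  proof (intro allI impI)
    fix n :: nat assume n: "n \<ge> 1"
    obtain j m where jm: "prod_decode (n - 1) = (j, m)" by (cases "prod_decode (n - 1)")
    show "f n - 0 \<in> Zloc p" using bz[of j m] blk_dec[OF n jm, of f] by simp
  qed
next
  fix g
  define qg where "qg j = \<pi> (blk g j)" for j
  define a where "a = qg 0"
  define f where "f n = (case prod_decode (n - 1) of (j, m) \<Rightarrow>
      blk g j m - io p (qg j) m + io p (qg (Suc j)) m)" for n
  have bf: "\<And>j. blk f j = (\<lambda>m. blk g j m - io p (qg j) m + io p (qg (Suc j)) m)"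
    unfolding blk_def f_def by (rule ext) simp
  have pbf: "\<And>j. \<pi> (blk f j) = qg (Suc j)"
    unfolding bf using p3 pio' qg_def by simp
  have qs: "\<And>j. Qs \<pi> a f j = qg j"
    unfolding Qs_def a_def using pbf by (simp split: nat.split)
  have hs: "\<And>j m. Hs p \<pi> a f j m = blk g j m"
    unfolding Hs_def using qs pbf bf by simp
  have "seq_eq p (phi p \<pi> (a, f)) g"
    unfolding seq_eq_def pr_eq_def
  proof (intro allI impI)
    fix n :: nat assume n: "n \<ge> 1"
    obtain j m where jm: "prod_decode (n - 1) = (j, m)" by (cases "prod_decode (n - 1)")
    have "phi p \<pi> (a, f) n = g n" using phi_dec[OF n jm] hs blk_dec[OF n jm] by simp
    thus "phi p \<pi> (a, f) n - g n \<in> Zloc p" using iszero by simp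
  qed
  thus "\<exists>a f. seq_eq p (phi p \<pi> (a, f)) g" by blast
qed

end

lemma part3: assumes "prime p" shows "\<exists>\<phi>. R_iso p \<phi>"
proof -
  obtain \<pi> where "pil p \<pi>" using exists_pi[OF assms] assms unfolding pil_def by blast
  thus ?thesis using pil.R_iso_phi by blast
qed


lemma part1_aux: assumes pr: "prime p" and st: "s < t"
  shows "1 / of_nat p ^ s - 1 / of_nat p ^ t \<notin> Zloc p"
proof
  assume h: "1 / of_nat p ^ s - 1 / of_nat p ^ t \<in> Zloc p"
  have p0: "(of_nat p :: rat) \<noteq> 0" using pr by (simp add: prime_gt_0_nat)
  have "(1::rat) / of_nat p ^ s = of_nat p ^ (t - s) / of_nat p ^ t"
    using st p0 by (simp add: field_simps flip: power_add)
  hence "1 / of_nat p ^ s - 1 / of_nat p ^ t = (of_int (int p ^ (t - s) - 1) :: rat) / of_nat p ^ t"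
    by (simp add: diff_divide_distrib)
  with h have "of_int (int p ^ (t - s) - 1) / of_nat p ^ t \<in> Zloc p" by simp
  hence "int p ^ t dvd int p ^ (t - s) - 1" by (rule Zloc_key[OF pr])
  moreover have "int p dvd int p ^ t" using st by (simp add: dvd_power)
  ultimately have "int p dvd int p ^ (t - s) - 1" by (rule dvd_trans[rotated])
  moreover have "int p dvd int p ^ (t - s)" using st by (simp add: dvd_power)
  ultimately have "int p dvd int p ^ (t - s) - (int p ^ (t - s) - 1)" by (rule dvd_diff[rotated])
  hence "int p dvd int 1" by simp
  hence "p dvd 1" by (simp only: int_dvd_int_iff)
  thus False using pr by simp
qed

lemma part1: assumes pr: "prime p"
  shows "\<forall>s\<ge>1. \<forall>t\<ge>1. seq_eq p (gen p s) (gen p t) \<longrightarrow> s = t"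
proof (intro allI impI)
  fix s t :: nat assume "s \<ge> 1" "t \<ge> 1" and h: "seq_eq p (gen p s) (gen p t)"
  hence h1: "1 / of_nat p ^ s - 1 / of_nat p ^ t \<in> Zloc p"
    unfolding seq_eq_def pr_eq_def gen_def by auto
  show "s = t"
  proof (rule ccontr)
    assume "s \<noteq> t"
    hence "s < t \<or> t < s" by auto
    thus False
    proof
      assume "s < t" thus False using part1_aux[OF pr] h1 by blast
    next
      assume "t < s"
      moreover have "1 / of_nat p ^ t - 1 / of_nat p ^ s \<in> Zloc p"
        using Zloc_uminus[OF h1] by simp
      ultimately show False using part1_aux[OF pr] by blast
    qed
  qed
qed

lemma part2: assumes pr: "prime p"
  shows "\<forall>S (c :: nat \<Rightarrow> int). finite S \<longrightarrow> S \<subseteq> {1..} \<longrightarrow>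
            seq_eq p (\<lambda>n. \<Sum>t\<in>S. of_int (c t) * gen p t n) (\<lambda>_. 0) \<longrightarrow>
            (\<forall>t\<in>S. c t = 0)"
proof (intro allI impI)
  fix S and c :: "nat \<Rightarrow> int"
  assume fin: "finite S" and S1: "S \<subseteq> {1..}"
    and h: "seq_eq p (\<lambda>n. \<Sum>t\<in>S. of_int (c t) * gen p t n) (\<lambda>_. 0)"
  show "\<forall>t\<in>S. c t = 0"
  proof (rule ccontr)
    assume "\<not> (\<forall>t\<in>S. c t = 0)"
    define S' where "S' = {t\<in>S. c t \<noteq> 0}"
    have fin': "finite S'" "S' \<noteq> {}" using fin \<open>\<not> _\<close> unfolding S'_def by auto
    define T where "T = Max S'"
    have TS: "T \<in> S'" unfolding T_def using fin' by simp
    have Tmax: "\<And>t. t \<in> S' \<Longrightarrow> t \<le> T" unfolding T_def using fin' by simp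
    have T1: "T \<ge> 1" using TS S1 unfolding S'_def by auto
    have cT: "c T \<noteq> 0" using TS unfolding S'_def by simp
    define n where "n = nat \<bar>c T\<bar> + 1"
    have n1: "n \<ge> 1" unfolding n_def by simp
    have p0: "(of_nat p :: rat) \<noteq> 0" using pr by (simp add: prime_gt_0_nat)
    have sumS: "(\<Sum>t\<in>S. of_int (c t) * gen p t n) = (\<Sum>t\<in>S'. of_int (c t) * gen p t n)"
      unfolding S'_def using fin by (intro sum.mono_neutral_right) auto
    define N where "N = (\<Sum>t\<in>S'. c t * int p ^ (n * (T - t)))"
    have trm: "of_int (c t) * gen p t n = of_int (c t * int p ^ (n * (T - t))) / of_nat p ^ (n * T)"
      if "t \<in> S'" for t
    proof -
      have "n * T = n * t + n * (T - t)" using Tmax[OF that] by (simp add: algebra_simps)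
      hence "(of_nat p :: rat) ^ (n * T) = of_nat p ^ (n * t) * of_nat p ^ (n * (T - t))"
        by (simp add: power_add)
      thus ?thesis unfolding gen_def using p0 by (simp add: field_simps)
    qed
    have "(\<Sum>t\<in>S'. of_int (c t) * gen p t n) = (\<Sum>t\<in>S'. of_int (c t * int p ^ (n * (T - t))) / of_nat p ^ (n * T))"
      using trm by (rule sum.cong[OF refl])
    also have "\<dots> = of_int N / of_nat p ^ (n * T)"
      unfolding N_def by (simp add: sum_divide_distrib)
    finally have eqN: "(\<Sum>t\<in>S. of_int (c t) * gen p t n) = of_int N / of_nat p ^ (n * T)"
      using sumS by simp
    have "(\<Sum>t\<in>S. of_int (c t) * gen p t n) - 0 \<in> Zloc p"
      using h n1 unfolding seq_eq_def pr_eq_def by blast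
    hence "of_int N / of_nat p ^ (n * T) \<in> Zloc p" using eqN by simp
    hence d1: "int p ^ (n * T) dvd N" by (rule Zloc_key[OF pr])
    have "int p ^ n dvd int p ^ (n * T)" using T1 by (intro le_imp_power_dvd) simp
    hence dN: "int p ^ n dvd N" using d1 by (rule dvd_trans)
    have split: "N = c T * int p ^ (n * (T - T)) + (\<Sum>t\<in>S' - {T}. c t * int p ^ (n * (T - t)))"
      unfolding N_def using fin' TS by (simp add: sum.remove)
    have drest: "int p ^ n dvd (\<Sum>t\<in>S' - {T}. c t * int p ^ (n * (T - t)))"
    proof (rule dvd_sum)
      fix t assume "t \<in> S' - {T}"
      hence "t < T" using Tmax by force
      hence "n \<le> n * (T - t)" by (simp add: Suc_le_eq)
      hence "int p ^ n dvd int p ^ (n * (T - t))" by (rule le_imp_power_dvd)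
      thus "int p ^ n dvd c t * int p ^ (n * (T - t))" by simp
    qed
    have "int p ^ n dvd N - (\<Sum>t\<in>S' - {T}. c t * int p ^ (n * (T - t)))"
      by (rule dvd_diff[OF dN drest])
    hence "int p ^ n dvd c T" using split by simp
    moreover have "\<not> int p ^ n dvd c T" using small_dvd[OF pr cT, of n] unfolding n_def by linarith
    ultimately show False by simp
  qed
qed

theorem mainTheorem8:
  fixes p :: nat
  assumes "prime p"
  shows "(\<forall>s\<ge>1. \<forall>t\<ge>1. seq_eq p (gen p s) (gen p t) \<longrightarrow> s = t)
       \<and> (\<forall>S (c :: nat \<Rightarrow> int). finite S \<longrightarrow> S \<subseteq> {1..} \<longrightarrow>
            seq_eq p (\<lambda>n. \<Sum>t\<in>S. of_int (c t) * gen p t n) (\<lambda>_. 0) \<longrightarrow>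
            (\<forall>t\<in>S. c t = 0))
       \<and> (\<exists>\<phi>. R_iso p \<phi>)"
  using part1[OF assms] part2[OF assms] part3[OF assms] by blast

end
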